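(* Let $a,b,c\in\mathbb{H}^3$, and let $v_a\in T_a\mathbb{H}^3$ and $v_b\in T_b\mathbb{H}^3$ be unit vectors. Let $\mathcal A$ be the hyperbolic area of the geodesic triangle $(a,b,c)$. Then $$\left\|\Gamma_a^bv_a-v_b\right\|_{T_b\mathbb{H}^3}\le\mathcal A+\left\|\Gamma_a^cv_a-\Gamma_b^cv_b\right\|_{T_c\mathbb{H}^3}.$$
   Context: $\Gamma_p^qv\in T_q\mathbb{H}^3$ denotes the parallel transport of $v\in T_p\mathbb{H}^3$ along the geodesic segment of $\mathbb{H}^3$ from $p$ to $q$. *)

theory Defs
  imports "HOL-Analysis.Analysis"
begin

text \<open>Hyperboloid model of hyperbolic 3-space inside Minkowski space
  R^{1,3}, represented as real \<times> real^3 (time coordinate first).\<close>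

type_synonym mpt = "real \<times> (real ^ 3)"

definition mink :: "mpt \<Rightarrow> mpt \<Rightarrow> real" where
  "mink p q = - (fst p * fst q) + snd p \<bullet> snd q"

definition hyp3 :: "mpt set" where
  "hyp3 = {p. mink p p = -1 \<and> fst p > 0}"

definition tangent :: "mpt \<Rightarrow> mpt set" where
  "tangent p = {v. mink p v = 0}"

definition lnorm :: "mpt \<Rightarrow> real" where
  "lnorm v = sqrt (mink v v)"

definition ptrans :: "mpt \<Rightarrow> mpt \<Rightarrow> mpt \<Rightarrow> mpt" where
  "ptrans p q v = v + (mink q v / (1 - mink p q)) *\<^sub>R (p + q)"

text \<open>Unit initial tangent vector at p of the geodesic from p to q (p \<noteq> q).\<close>
definition gdir :: "mpt \<Rightarrow> mpt \<Rightarrow> mpt" where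
  "gdir p q = (let w = q + mink p q *\<^sub>R p in (1 / lnorm w) *\<^sub>R w)"

definition angle_at :: "mpt \<Rightarrow> mpt \<Rightarrow> mpt \<Rightarrow> real" where
  "angle_at p q r = arccos (mink (gdir p q) (gdir p r))"

text \<open>Hyperbolic area of the geodesic triangle (a,b,c) (Gauss--Bonnet: angle defect;
  0 for triangles with coinciding vertices).\<close>
definition tri_area :: "mpt \<Rightarrow> mpt \<Rightarrow> mpt \<Rightarrow> real" where
  "tri_area a b c =
     (if a = b \<or> b = c \<or> a = c then 0
      else pi - (angle_at a b c + angle_at b c a + angle_at c a b))"

end

theory Submission
  imports Defs
begin

lemma mink_sym: "mink p q = mink q p"
  unfolding mink_def by (simp add: inner_commute)

lemma mink_add_left[simp]: "mink (u + v) w = mink u w + mink v w"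
  unfolding mink_def by (simp add: inner_add_left algebra_simps)

lemma mink_add_right[simp]: "mink w (u + v) = mink w u + mink w v"
  unfolding mink_def by (simp add: inner_add_right algebra_simps)

lemma mink_diff_left[simp]: "mink (u - v) w = mink u w - mink v w"
  unfolding mink_def by (simp add: inner_diff_left algebra_simps)

lemma mink_diff_right[simp]: "mink w (u - v) = mink w u - mink w v"
  unfolding mink_def by (simp add: inner_diff_right algebra_simps)

lemma mink_scale_left[simp]: "mink (r *\<^sub>R u) w = r * mink u w"
  unfolding mink_def by (simp add: algebra_simps)

lemma mink_scale_right[simp]: "mink w (r *\<^sub>R u) = r * mink w u"
  unfolding mink_def by (simp add: algebra_simps)

lemma mink_zero[simp]: "mink 0 w = 0" "mink w 0 = 0"
  unfolding mink_def by simp_all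

lemma timelike_orth_psd:
  assumes "mink t t < 0" "mink t v = 0"
  shows "mink v v \<ge> 0 \<and> (mink v v = 0 \<longrightarrow> v = 0)"
proof -
  obtain t0 T where t: "t = (t0, T)" by (cases t)
  obtain v0 V where v: "v = (v0, V)" by (cases v)
  have h1: "T \<bullet> T < t0 * t0" using assms(1) by (simp add: mink_def t)
  have h2: "t0 * v0 = T \<bullet> V" using assms(2) by (simp add: mink_def t v)
  have t0: "t0 \<noteq> 0" using h1 by (metis inner_ge_zero mult_zero_left not_le)
  have cs: "(T \<bullet> V)^2 \<le> (T \<bullet> T) * (V \<bullet> V)"
  proof -
    have "\<bar>T \<bullet> V\<bar> \<le> norm T * norm V" by (rule Cauchy_Schwarz_ineq2)
    hence "\<bar>T \<bullet> V\<bar>^2 \<le> (norm T * norm V)^2"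
      by (rule power_mono) simp
    thus ?thesis by (simp add: power_mult_distrib power2_norm_eq_inner power2_abs)
  qed
  have key: "t0^2 * mink v v = t0^2 * (V \<bullet> V) - (T \<bullet> V)^2"
    using h2 by (simp add: mink_def v power2_eq_square algebra_simps)
  have ge: "t0^2 * mink v v \<ge> (V \<bullet> V) * (t0 * t0 - T \<bullet> T)"
    using key cs by (simp add: power2_eq_square algebra_simps)
  have VV: "V \<bullet> V \<ge> 0" by simp
  have pos: "t0 * t0 - T \<bullet> T > 0" using h1 by simp
  have t2: "t0^2 > 0" using t0 by simp
  have "t0^2 * mink v v \<ge> 0" using ge VV pos by (meson mult_nonneg_nonneg less_imp_le order_trans)
  hence nn: "mink v v \<ge> 0" using t2 by (simp add: zero_le_mult_iff)
  moreover have "mink v v = 0 \<longrightarrow> v = 0"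
  proof
    assume "mink v v = 0"
    hence "(V \<bullet> V) * (t0 * t0 - T \<bullet> T) \<le> 0" using ge by simp
    hence "V \<bullet> V \<le> 0" using pos by (simp add: mult_le_0_iff)
    hence "V \<bullet> V = 0" using inner_ge_zero[of V] by linarith
    hence V0: "V = 0" by simp
    hence "v0 = 0" using h2 t0 by simp
    thus "v = 0" using V0 v by (simp add: zero_prod_def)
  qed
  ultimately show ?thesis by blast
qed

lemma hyp_self: "p \<in> hyp3 \<Longrightarrow> mink p p = -1"
  by (simp add: hyp3_def)

lemma hyp_ip: assumes "p \<in> hyp3" "q \<in> hyp3" shows "mink p q \<le> -1"
proof -
  obtain p0 P where p: "p = (p0, P)" by (cases p)
  obtain q0 Q where q: "q = (q0, Q)" by (cases q)
  have pp: "p0 * p0 = 1 + norm P ^ 2" "p0 > 0" using assms(1)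
    by (auto simp: hyp3_def mink_def p power2_norm_eq_inner)
  have qq: "q0 * q0 = 1 + norm Q ^ 2" "q0 > 0" using assms(2)
    by (auto simp: hyp3_def mink_def q power2_norm_eq_inner)
  have cs: "P \<bullet> Q \<le> norm P * norm Q" by (rule norm_cauchy_schwarz)
  have sq: "(1 + norm P * norm Q)^2 \<le> (p0 * q0)^2"
  proof -
    have "(p0 * q0)^2 = (p0*p0) * (q0*q0)" by (simp add: power2_eq_square algebra_simps)
    also have "\<dots> = (1 + norm P ^ 2) * (1 + norm Q ^ 2)" using pp qq by simp
    finally have e: "(p0 * q0)^2 = (1 + norm P ^ 2) * (1 + norm Q ^ 2)" .
    have "0 \<le> (norm P - norm Q)^2" by simp
    thus ?thesis unfolding e by (simp add: power2_eq_square algebra_simps)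
  qed
  have "1 + norm P * norm Q \<le> p0 * q0"
    using power2_le_imp_le[OF sq] pp(2) qq(2) by simp
  thus ?thesis using cs by (simp add: mink_def p q)
qed

lemma hyp_ip_strict: assumes "p \<in> hyp3" "q \<in> hyp3" "p \<noteq> q" shows "mink p q < -1"
proof (rule ccontr)
  assume "\<not> mink p q < -1"
  hence e: "mink p q = -1" using hyp_ip[OF assms(1,2)] by simp
  have pp: "mink p p = -1" "mink q q = -1" using assms by (simp_all add: hyp_self)
  have "mink (p+q) (p+q) < 0" using e pp by (simp add: mink_sym[of q p])
  moreover have "mink (p+q) (p-q) = 0" using pp by (simp add: mink_sym[of q p])
  ultimately have "mink (p-q) (p-q) = 0 \<longrightarrow> p - q = 0" using timelike_orth_psd by blast
  moreover have "mink (p-q) (p-q) = 0" using e pp by (simp add: mink_sym[of q p])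
  ultimately show False using assms(3) by simp
qed

lemma tangent_psd: assumes "p \<in> hyp3" "v \<in> tangent p"
  shows "mink v v \<ge> 0" "mink v v = 0 \<Longrightarrow> v = 0"
  using timelike_orth_psd[of p v] assms by (auto simp: hyp3_def tangent_def)

lemma tangent_cs: assumes "p \<in> hyp3" "u \<in> tangent p" "v \<in> tangent p"
  shows "(mink u v)^2 \<le> mink u u * mink v v"
proof (cases "mink v v = 0")
  case True
  hence "v = 0" using tangent_psd assms by blast
  thus ?thesis by simp
next
  case False
  hence C: "mink v v > 0" using tangent_psd[OF assms(1,3)] by simp
  let ?w = "mink v v *\<^sub>R u - mink u v *\<^sub>R v"
  have "?w \<in> tangent p" using assms by (simp add: tangent_def)
  hence g1: "mink ?w ?w \<ge> 0" using tangent_psd assms(1) by blast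
  have g2: "mink ?w ?w = mink v v * (mink u u * mink v v - (mink u v)^2)"
    by (simp add: mink_sym[of v u] power2_eq_square algebra_simps)
  have "mink v v * (mink u u * mink v v - (mink u v)^2) \<ge> 0" using g1 g2 by linarith
  thus ?thesis using C by (simp add: zero_le_mult_iff)
qed

lemma tangent_add: "u \<in> tangent p \<Longrightarrow> v \<in> tangent p \<Longrightarrow> u + v \<in> tangent p"
  and tangent_diff: "u \<in> tangent p \<Longrightarrow> v \<in> tangent p \<Longrightarrow> u - v \<in> tangent p"
  by (simp_all add: tangent_def)

lemma lnorm_triangle: assumes "p \<in> hyp3" "u \<in> tangent p" "v \<in> tangent p"
  shows "lnorm (u + v) \<le> lnorm u + lnorm v"
proof -
  have A: "mink u u \<ge> 0" and C: "mink v v \<ge> 0" using tangent_psd assms by blast+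
  have "(mink u v)^2 \<le> mink u u * mink v v" by (rule tangent_cs[OF assms])
  hence "\<bar>mink u v\<bar> \<le> sqrt (mink u u * mink v v)"
    using real_le_rsqrt by (metis power2_abs)
  hence B: "mink u v \<le> sqrt (mink u u) * sqrt (mink v v)" by (simp add: real_sqrt_mult)
  have "mink (u+v) (u+v) = mink u u + 2 * mink u v + mink v v"
    by (simp add: mink_sym[of v u])
  also have "\<dots> \<le> (sqrt (mink u u) + sqrt (mink v v))^2"
    using A C B by (simp add: power2_eq_square algebra_simps)
  finally have "sqrt (mink (u+v) (u+v)) \<le> sqrt (mink u u) + sqrt (mink v v)"
    using A C by (meson real_le_lsqrt real_sqrt_ge_zero add_nonneg_nonneg order_trans real_sqrt_le_mono) 
  thus ?thesis by (simp add: lnorm_def)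
qed

lemma denom_pos: assumes "p \<in> hyp3" "q \<in> hyp3" shows "1 - mink p q \<ge> 2"
  using hyp_ip[OF assms] by linarith

lemma ptrans_k: assumes "p \<in> hyp3" "q \<in> hyp3"
  shows "mink q v = (mink q v / (1 - mink p q)) * (1 - mink p q)"
  using denom_pos[OF assms] by simp

lemma ptrans_tangent: assumes "p \<in> hyp3" "q \<in> hyp3" "v \<in> tangent p"
  shows "ptrans p q v \<in> tangent q"
proof -
  define k where "k = mink q v / (1 - mink p q)"
  have kk: "mink q v = k * (1 - mink p q)" using ptrans_k[OF assms(1,2)] k_def by simp
  have qq: "mink q q = -1" using assms(2) by (simp add: hyp_self)
  have "mink q (ptrans p q v) = mink q v + k * (mink q p + mink q q)"
    by (simp add: ptrans_def k_def[symmetric] algebra_simps)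
  also have "\<dots> = 0" unfolding kk using qq by (simp add: mink_sym[of q p] algebra_simps)
  finally show ?thesis by (simp add: tangent_def)
qed

lemma ptrans_isom: assumes "p \<in> hyp3" "q \<in> hyp3" "u \<in> tangent p" "v \<in> tangent p"
  shows "mink (ptrans p q u) (ptrans p q v) = mink u v"
proof -
  define ku where "ku = mink q u / (1 - mink p q)"
  define kv where "kv = mink q v / (1 - mink p q)"
  have ku: "mink q u = ku * (1 - mink p q)" using ptrans_k[OF assms(1,2)] ku_def by simp
  have kv: "mink q v = kv * (1 - mink p q)" using ptrans_k[OF assms(1,2)] kv_def by simp
  have pp: "mink p p = -1" "mink q q = -1" using assms(1,2) by (simp_all add: hyp_self)
  have t: "mink p u = 0" "mink p v = 0" using assms(3,4) by (simp_all add: tangent_def)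
  have "mink (ptrans p q u) (ptrans p q v) = mink u v + kv * (mink u p + mink u q)
     + ku * (mink p v + mink q v) + ku * kv * (mink p p + mink p q + mink q p + mink q q)"
    by (simp add: ptrans_def ku_def[symmetric] kv_def[symmetric] algebra_simps)
  also have "\<dots> = mink u v"
    using pp t unfolding mink_sym[of u p] mink_sym[of u q] mink_sym[of q p] ku kv
    by (simp add: algebra_simps)
  finally show ?thesis .
qed

lemma ptrans_adj: assumes "p \<in> hyp3" "q \<in> hyp3" "u \<in> tangent q" "v \<in> tangent p"
  shows "mink (ptrans q p u) v = mink u (ptrans p q v)"
proof -
  have t: "mink q u = 0" "mink p v = 0" using assms(3,4) by (simp_all add: tangent_def)
  have "mink (ptrans q p u) v = mink u v + (mink p u / (1 - mink q p)) * mink q v"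
    using t by (simp add: ptrans_def algebra_simps)
  moreover have "mink u (ptrans p q v) = mink u v + (mink q v / (1 - mink p q)) * mink u p"
    using t by (simp add: ptrans_def algebra_simps mink_sym[of u q])
  ultimately show ?thesis by (simp add: mink_sym[of q p] mink_sym[of u p])
qed

lemma ptrans_self: "v \<in> tangent p \<Longrightarrow> ptrans p p v = v"
  by (simp add: ptrans_def tangent_def)

lemma ptrans_inv: assumes "p \<in> hyp3" "q \<in> hyp3" "v \<in> tangent p"
  shows "ptrans q p (ptrans p q v) = v"
proof -
  define k where "k = mink q v / (1 - mink p q)"
  have kk: "mink q v = k * (1 - mink p q)" using ptrans_k[OF assms(1,2)] k_def by simp
  have d: "1 - mink p q \<noteq> 0" using denom_pos[OF assms(1,2)] by simp
  have pp: "mink p p = -1" using assms(1) by (simp add: hyp_self)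
  have t: "mink p v = 0" using assms(3) by (simp add: tangent_def)
  have "mink p (ptrans p q v) = k * (mink p p + mink p q)"
    using t by (simp add: ptrans_def k_def[symmetric] algebra_simps)
  also have "\<dots> = - mink q v" using pp kk by (simp add: algebra_simps)
  finally have e: "mink p (ptrans p q v) / (1 - mink q p) = - k"
    using d kk by (simp add: mink_sym[of q p])
  show ?thesis unfolding ptrans_def[of q p "ptrans p q v"] e
    by (simp add: ptrans_def k_def[symmetric] algebra_simps)
qed

lemma one_minus_cos_le: "1 - cos (A::real) \<le> A^2 / 2"
proof -
  have "cos A = 1 - 2 * sin (A/2) ^ 2" using cos_double_sin[of "A/2"] by simp
  moreover have "sin (A/2)^2 \<le> (A/2)^2"
    using abs_sin_x_le_abs_x[of "A/2"] by (metis abs_ge_zero power2_abs power_mono)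
  ultimately show ?thesis by (simp add: power_divide)
qed

lemma sin_arccos_frac:
  fixes c r s t :: real
  assumes "s > 0" "t > 0" "r \<ge> 0" "1 - c^2 = (r/(s*t))^2"
  shows "-1 \<le> c" "c \<le> 1" "sin (arccos c) = r/(s*t)"
proof -
  have "c^2 \<le> 1" using assms(4) by (metis diff_ge_0_iff_ge zero_le_power2)
  hence "\<bar>c\<bar> \<le> 1" by (simp add: abs_square_le_1)
  thus "-1 \<le> c" "c \<le> 1" by auto
  hence "sin (arccos c) = sqrt ((r/(s*t))^2)" using sin_arccos assms(4) by simp
  also have "\<dots> = r/(s*t)" using assms(1-3) by simp
  finally show "sin (arccos c) = r/(s*t)" .
qed

lemma frac_aux: fixes M Pi D :: real assumes "M \<noteq> 0" "Pi \<noteq> 0"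
  shows "(Pi * M - D * M) / (Pi * M) = 1 - D / Pi"
  using assms by (simp add: field_simps)

lemma num_nonneg:
  fixes x y z qx qy D A1 B1 :: real
  assumes x: "x > 1" and y: "y > 1" and z: "z > 1" and A1: "A1 = y*z - x" and B1: "B1 = x*z - y"
    and qxp: "qx > 0" and qyp: "qy > 0" and qx2: "qx^2 = x^2 - 1" and qy2: "qy^2 = y^2 - 1"
    and Dnn: "D \<ge> 0" and iA: "A1^2 = (y^2-1)*(z^2-1) - D" and iB: "B1^2 = (x^2-1)*(z^2-1) - D"
  shows "A1*qx + B1*qy \<ge> 0"
proof -
  have yz: "y*z \<ge> y" using y z by (simp add: mult_le_cancel_left1)
  have xz: "x*z \<ge> x" using x z by (simp add: mult_le_cancel_left1)
  have Dxy: "(B1*qy)^2 - (A1*qx)^2 = D*(x^2 - y^2)"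
    by (simp add: power_mult_distrib iA iB qx2 qy2) (simp add: algebra_simps)
  show ?thesis
  proof (cases "A1 < 0")
    case True
    hence "x > y" using yz A1 by linarith
    hence B1p: "B1 > 0" using xz B1 by linarith
    have "y^2 \<le> x^2" using \<open>x > y\<close> y by (intro power_mono) auto
    hence "D*(x^2 - y^2) \<ge> 0" using Dnn by simp
    hence sq: "(-A1*qx)^2 \<le> (B1*qy)^2" using Dxy by simp
    have "0 \<le> B1*qy" using B1p qyp by simp
    hence "-A1*qx \<le> B1*qy" using power2_le_imp_le[OF sq] by simp
    thus ?thesis by linarith
  next
    case False
    show ?thesis
    proof (cases "B1 < 0")
      case True
      hence "y > x" using xz B1 by linarith
      hence A1p: "A1 > 0" using yz A1 by linarith
      have "x^2 \<le> y^2" using \<open>y > x\<close> x by (intro power_mono) auto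
      hence "D*(y^2 - x^2) \<ge> 0" using Dnn by simp
      hence sq: "(-B1*qy)^2 \<le> (A1*qx)^2" using Dxy by (simp add: algebra_simps)
      have "0 \<le> A1*qx" using A1p qxp by simp
      hence "-B1*qy \<le> A1*qx" using power2_le_imp_le[OF sq] by simp
      thus ?thesis by linarith
    next
      case False
      hence "0 \<le> B1*qy" "0 \<le> A1*qx" using \<open>\<not> A1 < 0\<close> qxp qyp by simp_all
      thus ?thesis by linarith
    qed
  qed
qed

lemma trig_core:
  fixes x y z qx qy qz D r :: real
  assumes x: "x > 1" and y: "y > 1" and z: "z > 1"
    and Ddef: "D = 1 + 2*x*y*z - x^2 - y^2 - z^2" and Dnn: "D \<ge> 0"
    and qx: "qx = sqrt (x^2 - 1)" and qy: "qy = sqrt (y^2 - 1)" and qz: "qz = sqrt (z^2 - 1)"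
  defines "A \<equiv> pi - (arccos ((y*z - x)/(qz*qy)) + arccos ((x*z - y)/(qx*qz))
                  + arccos ((x*y - z)/(qy*qx)))"
  shows "A \<ge> 0 \<and> cos A = 1 - D/((1+x)*(1+y)*(1+z))"
proof -
  define r where "r = sqrt D"
  have r2: "r^2 = D" and r0: "r \<ge> 0" using Dnn by (simp_all add: r_def)
  have x1: "x^2 - 1 > 0" using x by (simp add: power2_eq_square) (smt (verit) mult_less_cancel_left1)
  have y1: "y^2 - 1 > 0" using y by (simp add: power2_eq_square) (smt (verit) mult_less_cancel_left1)
  have z1: "z^2 - 1 > 0" using z by (simp add: power2_eq_square) (smt (verit) mult_less_cancel_left1)
  have qxp: "qx > 0" and qx2: "qx^2 = x^2 - 1" using x1 by (simp_all add: qx)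
  have qyp: "qy > 0" and qy2: "qy^2 = y^2 - 1" using y1 by (simp_all add: qy)
  have qzp: "qz > 0" and qz2: "qz^2 = z^2 - 1" using z1 by (simp_all add: qz)
  define A1 where "A1 = y*z - x"
  define B1 where "B1 = x*z - y"
  define C1 where "C1 = x*y - z"
  have iA: "A1^2 = (y^2-1)*(z^2-1) - D" unfolding A1_def Ddef by (simp add: power2_eq_square algebra_simps)
  have iB: "B1^2 = (x^2-1)*(z^2-1) - D" unfolding B1_def Ddef by (simp add: power2_eq_square algebra_simps)
  have iC: "C1^2 = (x^2-1)*(y^2-1) - D" unfolding C1_def Ddef by (simp add: power2_eq_square algebra_simps)
  define ca where "ca = A1/(qz*qy)"
  define cb where "cb = B1/(qx*qz)"
  define cg where "cg = C1/(qy*qx)"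
  have fa: "1 - ca^2 = (r/(qz*qy))^2"
  proof -
    have "1 - ca^2 = ((qz^2*qy^2) - A1^2)/(qz^2*qy^2)" using qzp qyp
      by (simp add: ca_def power_divide power_mult_distrib field_simps)
    also have "\<dots> = r^2/(qz^2*qy^2)" unfolding iA r2 qz2 qy2 by (simp add: algebra_simps)
    finally show ?thesis by (simp add: power_divide power_mult_distrib)
  qed
  have fb: "1 - cb^2 = (r/(qx*qz))^2"
  proof -
    have "1 - cb^2 = ((qx^2*qz^2) - B1^2)/(qx^2*qz^2)" using qxp qzp
      by (simp add: cb_def power_divide power_mult_distrib field_simps)
    also have "\<dots> = r^2/(qx^2*qz^2)" unfolding iB r2 qz2 qx2 by (simp add: algebra_simps)
    finally show ?thesis by (simp add: power_divide power_mult_distrib)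
  qed
  have fg: "1 - cg^2 = (r/(qy*qx))^2"
  proof -
    have "1 - cg^2 = ((qy^2*qx^2) - C1^2)/(qy^2*qx^2)" using qxp qyp
      by (simp add: cg_def power_divide power_mult_distrib field_simps)
    also have "\<dots> = r^2/(qy^2*qx^2)" unfolding iC r2 qy2 qx2 by (simp add: algebra_simps)
    finally show ?thesis by (simp add: power_divide power_mult_distrib)
  qed
  note ha = sin_arccos_frac[OF qzp qyp r0 fa]
  note hb = sin_arccos_frac[OF qxp qzp r0 fb]
  note hg = sin_arccos_frac[OF qyp qxp r0 fg]
  define al where "al = arccos ca"
  define be where "be = arccos cb"
  define ga where "ga = arccos cg"
  have cal: "cos al = ca" "sin al = r/(qz*qy)" using ha by (simp_all add: al_def)
  have cbe: "cos be = cb" "sin be = r/(qx*qz)" using hb by (simp_all add: be_def)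
  have cga: "cos ga = cg" "sin ga = r/(qy*qx)" using hg by (simp_all add: ga_def)
  have Aeq: "A = pi - (al + be + ga)" unfolding A_def al_def be_def ga_def ca_def cb_def cg_def
      A1_def B1_def C1_def by simp
  have "cos (al + be + ga) = (ca*cb - r/(qz*qy) * (r/(qx*qz))) * cg
        - (r/(qz*qy) * cb + ca * (r/(qx*qz))) * (r/(qy*qx))"
    by (simp add: cos_add sin_add cal cbe cga)
  also have "\<dots> = (A1*B1*C1 - r^2*(A1+B1+C1))/(qx^2*qy^2*qz^2)"
    using qxp qyp qzp by (simp add: ca_def cb_def cg_def field_simps) (simp add: power2_eq_square algebra_simps)
  also have "\<dots> = (A1*B1*C1 - D*(A1+B1+C1))/((x^2-1)*(y^2-1)*(z^2-1))"
    by (simp add: qx2 qy2 qz2 r2)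
  finally have cs: "cos (al + be + ga) = (A1*B1*C1 - D*(A1+B1+C1))/((x^2-1)*(y^2-1)*(z^2-1))" .
  have cosA: "cos A = 1 - D/((1+x)*(1+y)*(1+z))"
  proof -
    have p1: "(1+x) > 0" "1+y > 0" "1+z > 0" using x y z by auto
    have "cos A = - ((A1*B1*C1 - D*(A1+B1+C1))/((x^2-1)*(y^2-1)*(z^2-1)))"
      using cs Aeq by simp
    also have "\<dots> = ((x^2-1)*(y^2-1)*(z^2-1) - D*((x-1)*(y-1)*(z-1)))/((x^2-1)*(y^2-1)*(z^2-1))"
    proof -
      have "-(A1*B1*C1 - D*(A1+B1+C1)) = (x^2-1)*(y^2-1)*(z^2-1) - D*((x-1)*(y-1)*(z-1))"
        unfolding A1_def B1_def C1_def Ddef by (simp add: power2_eq_square algebra_simps)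
      thus ?thesis by (simp only: minus_divide_left)
    qed
    also have "\<dots> = 1 - D/((1+x)*(1+y)*(1+z))"
    proof -
      have PM: "(x^2-1)*(y^2-1)*(z^2-1) = ((1+x)*(1+y)*(1+z)) * ((x-1)*(y-1)*(z-1))"
        by (simp add: power2_eq_square algebra_simps)
      have M: "(x-1)*(y-1)*(z-1) \<noteq> 0" and Pi: "(1+x)*(1+y)*(1+z) \<noteq> 0" using x y z by auto
      show ?thesis using frac_aux[OF M Pi, of D] unfolding PM[symmetric] .
    qed
    finally show ?thesis .
  qed
  have num: "A1*qx + B1*qy \<ge> 0"
    by (rule num_nonneg[OF x y z A1_def B1_def qxp qyp qx2 qy2 Dnn iA iB])
  have cab: "ca + cb \<ge> 0"
  proof -
    have "ca + cb = (A1*qx + B1*qy)/(qx*qy*qz)" using qxp qyp qzp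
      by (simp add: ca_def cb_def field_simps)
    thus ?thesis using num qxp qyp qzp by simp
  qed
  have al0: "0 \<le> al" "al \<le> pi" using ha(1,2) by (simp_all add: al_def arccos_lbound arccos_ubound)
  have be0: "0 \<le> be" "be \<le> pi" using hb(1,2) by (simp_all add: be_def arccos_lbound arccos_ubound)
  have ga0: "0 \<le> ga" "ga \<le> pi" using hg(1,2) by (simp_all add: ga_def arccos_lbound arccos_ubound)
  have "al \<le> arccos (- cb)" unfolding al_def
    using cab ha(2) hb(2) by (intro arccos_le_arccos) simp_all
  hence ab: "al + be \<le> pi" using arccos_minus[OF hb(1,2)] by (simp add: be_def)
  have cg_ge: "cg \<ge> cos (pi - (al + be))"
  proof -
    have "cg - cos (pi - (al + be)) = cg + (ca*cb - r/(qz*qy) * (r/(qx*qz)))"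
      by (simp add: cos_add cal cbe)
    also have "\<dots> = (C1*qz^2 + A1*B1 - r^2)/(qx*qy*qz^2)"
      using qxp qyp qzp by (simp add: ca_def cb_def cg_def field_simps) (simp add: power2_eq_square algebra_simps)
    also have "\<dots> = (z - 1)*D/(qx*qy*qz^2)"
      unfolding qz2 r2 by (simp add: A1_def B1_def C1_def Ddef power2_eq_square algebra_simps)
    also have "\<dots> \<ge> 0" using z Dnn qxp qyp qzp by simp
    finally show ?thesis by simp
  qed
  have "ga \<le> arccos (cos (pi - (al + be)))" unfolding ga_def
    using cg_ge hg(2) by (intro arccos_le_arccos) simp_all
  also have "\<dots> = pi - (al + be)" using ab al0 be0 by (intro arccos_cos) simp_all
  finally have "A \<ge> 0" using Aeq by simp
  thus ?thesis using cosA by simp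
qed
lemma hol_identity:
  fixes X Y Z be ga k1 k2 k3 :: real
  assumes d: "X \<noteq> 0" "Y \<noteq> 0" "Z \<noteq> 0"
    and k1: "k1 = be/Z" and k2: "k2 = ga/Y" and k3: "k3 = (be - k2*((Z-1)+(X-1)))/X"
  shows "1 + (k2+k3)*ga + k3*be + k1*(-k2 - (k2+k3)*(Y-1) - k3*(Z-1)) + k1*(be - k2*(Z-1) - (k2+k3)*(X-1) - k3)
     = 1 - (((Y-1)^2-1)*be^2 - 2*((Y-1)*(Z-1)-(X-1))*be*ga + ((Z-1)^2-1)*ga^2)/(X*Y*Z)"
  unfolding k3 unfolding k1 k2 using d
  by (simp add: field_simps) (simp add: power2_eq_square algebra_simps)

lemma gram_real:
  fixes x y z be ga D s g :: real
  assumes s: "s > 0" and sdef: "s = y^2 - 1" and g: "g = y*z - x"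
    and D: "D = 1 + 2*x*y*z - x^2 - y^2 - z^2"
    and cs: "(s*(s*be - g*ga))^2 \<le> (s*(s - ga^2))*(s*D)"
  shows "(y^2-1)*be^2 - 2*(y*z-x)*be*ga + (z^2-1)*ga^2 \<le> D"
proof -
  have "s^2 * (s*be - g*ga)^2 \<le> s^2 * ((s - ga^2)*D)" using cs
    by (simp add: power_mult_distrib power2_eq_square algebra_simps)
  hence h: "(s*be - g*ga)^2 \<le> (s - ga^2)*D" using s by simp
  have "s * ((y^2-1)*be^2 - 2*(y*z-x)*be*ga + (z^2-1)*ga^2) = (s*be - g*ga)^2 + D*ga^2"
    unfolding sdef g D by (simp add: power2_eq_square algebra_simps)
  also have "\<dots> \<le> s * D" using h by (simp add: algebra_simps)
  finally show ?thesis using s by simp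
qed

lemma final_real:
  fixes Q D P A L :: real
  assumes "L = 2*Q/P" "Q \<le> D" "P > 0" "cos A = 1 - D/P" "A \<ge> 0"
  shows "sqrt L \<le> A"
proof -
  have "1 - cos A \<le> A^2/2"
  proof -
    have "cos A = 1 - 2 * sin (A/2) ^ 2" using cos_double_sin[of "A/2"] by simp
    moreover have "sin (A/2)^2 \<le> (A/2)^2"
      using abs_sin_x_le_abs_x[of "A/2"] by (metis abs_ge_zero power2_abs power_mono)
    ultimately show ?thesis by (simp add: power_divide)
  qed
  hence "D/P \<le> A^2/2" using assms(4) by simp
  moreover have "Q/P \<le> D/P" using assms(2,3) by (simp add: divide_right_mono)
  moreover have "L = 2 * (Q/P)" using assms(1) by simp
  ultimately have "L \<le> A^2" by linarith
  hence "sqrt L \<le> sqrt (A^2)" by (rule real_sqrt_le_mono)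
  thus ?thesis using assms(5) by simp
qed

lemma mink_diff_sq: "mink (u - v) (u - v) = mink u u - 2 * mink u v + mink v v"
  by (simp add: mink_sym[of v u])

lemma gdir_ip: assumes "p \<in> hyp3" "q \<in> hyp3" "r \<in> hyp3"
  shows "mink (gdir p q) (gdir p r) = (mink q r + mink p q * mink p r)
           / (sqrt ((mink p q)^2 - 1) * sqrt ((mink p r)^2 - 1))"
proof -
  have pp: "mink p p = -1" "mink q q = -1" "mink r r = -1" using assms by (simp_all add: hyp_self)
  have nq: "lnorm (q + mink p q *\<^sub>R p) = sqrt ((mink p q)^2 - 1)"
    unfolding lnorm_def using pp by (simp add: mink_sym[of q p] power2_eq_square algebra_simps)
  have nr: "lnorm (r + mink p r *\<^sub>R p) = sqrt ((mink p r)^2 - 1)"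
    unfolding lnorm_def using pp by (simp add: mink_sym[of r p] power2_eq_square algebra_simps)
  have ip: "mink (q + mink p q *\<^sub>R p) (r + mink p r *\<^sub>R p) = mink q r + mink p q * mink p r"
    using pp by (simp add: mink_sym[of q p] mink_sym[of r p] algebra_simps)
  have gq: "gdir p q = (1 / sqrt ((mink p q)^2 - 1)) *\<^sub>R (q + mink p q *\<^sub>R p)"
    by (simp add: gdir_def Let_def nq)
  have gr: "gdir p r = (1 / sqrt ((mink p r)^2 - 1)) *\<^sub>R (r + mink p r *\<^sub>R p)"
    by (simp add: gdir_def Let_def nr)
  show ?thesis unfolding gq gr by (simp only: mink_scale_left mink_scale_right ip) simp
qed

lemma holonomy_nondeg:
  assumes a: "a \<in> hyp3" and b: "b \<in> hyp3" and c: "c \<in> hyp3"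
    and ab: "a \<noteq> b" and bc: "b \<noteq> c" and ac: "a \<noteq> c"
    and va: "va \<in> tangent a" and nva: "mink va va = 1"
  shows "lnorm (ptrans a b va - ptrans c b (ptrans a c va)) \<le> tri_area a b c"
proof -
  define x where "x = - mink b c"
  define y where "y = - mink a c"
  define z where "z = - mink a b"
  have x1: "x > 1" using hyp_ip_strict[OF b c bc] by (simp add: x_def)
  have y1: "y > 1" using hyp_ip_strict[OF a c ac] by (simp add: y_def)
  have z1: "z > 1" using hyp_ip_strict[OF a b ab] by (simp add: z_def)
  define be where "be = mink b va"
  define ga where "ga = mink c va"
  have at: "mink a a = -1" "mink b b = -1" "mink c c = -1"
    "mink a b = -z" "mink b a = -z" "mink a c = -y" "mink c a = -y" "mink b c = -x" "mink c b = -x"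
    "mink a va = 0" "mink va a = 0" "mink b va = be" "mink va b = be" "mink c va = ga" "mink va c = ga"
    "mink va va = 1"
    using a b c va nva
    by (simp_all add: x_def y_def z_def be_def ga_def hyp_self tangent_def mink_sym[of b a]
        mink_sym[of c a] mink_sym[of c b] mink_sym[of va a] mink_sym[of va b] mink_sym[of va c])
  define k1 where "k1 = be/(1+z)"
  define k2 where "k2 = ga/(1+y)"
  define k3 where "k3 = (be - k2*(z+x))/(1+x)"
  have u1: "ptrans a b va = va + k1 *\<^sub>R (a+b)" by (simp add: ptrans_def at k1_def)
  have t: "ptrans a c va = va + k2 *\<^sub>R (a+c)" by (simp add: ptrans_def at k2_def)
  have mbt: "mink b (va + k2 *\<^sub>R (a+c)) = be - k2*(z+x)" by (simp add: at algebra_simps)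
  have u3: "ptrans c b (ptrans a c va) = (va + k2 *\<^sub>R (a+c)) + k3 *\<^sub>R (c+b)"
    unfolding t ptrans_def[of c b] mbt by (simp add: at k3_def)
  have tc: "ptrans a c va \<in> tangent c" by (rule ptrans_tangent[OF a c va])
  have n1: "mink (ptrans a b va) (ptrans a b va) = 1" using ptrans_isom[OF a b va va] nva by simp
  have n3: "mink (ptrans c b (ptrans a c va)) (ptrans c b (ptrans a c va)) = 1"
    using ptrans_isom[OF c b tc tc] ptrans_isom[OF a c va va] nva by simp
  define Q where "Q = (y^2-1)*be^2 - 2*(y*z-x)*be*ga + (z^2-1)*ga^2"
  define Pi where "Pi = (1+x)*(1+y)*(1+z)"
  have Pip: "Pi > 0" using x1 y1 z1 by (simp add: Pi_def)
  have ip: "mink (ptrans a b va) (ptrans c b (ptrans a c va)) = 1 - Q/Pi"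
  proof -
    have "mink (ptrans a b va) (ptrans c b (ptrans a c va)) =
      1 + (k2+k3)*ga + k3*be + k1*(-k2 - (k2+k3)*y - k3*z) + k1*(be - k2*z - (k2+k3)*x - k3)"
      unfolding u1 u3 by (simp add: at algebra_simps)
    also have "\<dots> = 1 - Q/Pi"
      using hol_identity[of "1+x" "1+y" "1+z" k1 be k2 ga k3] x1 y1 z1
      by (simp add: k1_def k2_def k3_def Q_def Pi_def)
    finally show ?thesis .
  qed
  have L: "mink (ptrans a b va - ptrans c b (ptrans a c va)) (ptrans a b va - ptrans c b (ptrans a c va))
     = 2*Q/Pi"
    unfolding mink_diff_sq n1 n3 ip by simp
  define D where "D = 1 + 2*x*y*z - x^2 - y^2 - z^2"
  define s where "s = y^2 - 1"
  define g where "g = y*z - x"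
  have sp: "s > 0" using y1 unfolding s_def
    by (simp add: power2_eq_square) (smt (verit) mult_less_cancel_left1)
  define e where "e = s *\<^sub>R va - ga *\<^sub>R (c - y *\<^sub>R a)"
  define f where "f = s *\<^sub>R (b - z *\<^sub>R a) - g *\<^sub>R (c - y *\<^sub>R a)"
  have te: "e \<in> tangent a" unfolding tangent_def e_def by (simp add: at)
  have tf: "f \<in> tangent a" unfolding tangent_def f_def by (simp add: at)
  have ef: "mink e f = s*(s*be - g*ga)"
    unfolding e_def f_def s_def g_def by (simp add: at power2_eq_square algebra_simps)
  have ee: "mink e e = s*(s - ga^2)"
    unfolding e_def s_def by (simp add: at power2_eq_square algebra_simps)
  have ff: "mink f f = s*D"
    unfolding f_def s_def g_def D_def by (simp add: at power2_eq_square algebra_simps)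
  have Dnn: "D \<ge> 0"
  proof -
    have "s * D \<ge> 0" using tangent_psd(1)[OF a tf] ff by simp
    thus ?thesis using sp by (simp add: zero_le_mult_iff)
  qed
  have QD: "Q \<le> D" unfolding Q_def
    using gram_real[OF sp s_def g_def D_def] tangent_cs[OF a te tf] ef ee ff by simp
  have area: "tri_area a b c = pi - (arccos ((y*z - x)/(sqrt (z^2-1)* sqrt (y^2-1)))
      + arccos ((x*z - y)/(sqrt (x^2-1)* sqrt (z^2-1))) + arccos ((x*y - z)/(sqrt (y^2-1)* sqrt (x^2-1))))"
  proof -
    have 1: "angle_at a b c = arccos ((y*z - x)/(sqrt (z^2-1)* sqrt (y^2-1)))"
      unfolding angle_at_def gdir_ip[OF a b c] by (simp add: at algebra_simps)
    have 2: "angle_at b c a = arccos ((x*z - y)/(sqrt (x^2-1)* sqrt (z^2-1)))"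
      unfolding angle_at_def gdir_ip[OF b c a] by (simp add: at algebra_simps)
    have 3: "angle_at c a b = arccos ((x*y - z)/(sqrt (y^2-1)* sqrt (x^2-1)))"
      unfolding angle_at_def gdir_ip[OF c a b] by (simp add: at algebra_simps)
    show ?thesis unfolding tri_area_def using ab bc ac 1 2 3 by simp
  qed
  have tc: "tri_area a b c \<ge> 0 \<and> cos (tri_area a b c) = 1 - D/((1+x)*(1+y)*(1+z))"
    unfolding area by (rule trig_core[OF x1 y1 z1 D_def Dnn refl refl refl])
  show ?thesis unfolding lnorm_def
    by (rule final_real[OF L QD Pip]) (use tc Pi_def in auto)
qed

lemma holonomy_bound:
  assumes a: "a \<in> hyp3" and b: "b \<in> hyp3" and c: "c \<in> hyp3"
    and va: "va \<in> tangent a" and nva: "mink va va = 1"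
  shows "lnorm (ptrans a b va - ptrans c b (ptrans a c va)) \<le> tri_area a b c"
proof (cases "a = b \<or> b = c \<or> a = c")
  case True
  have "ptrans a b va = ptrans c b (ptrans a c va)"
  proof -
    { assume "a = c" hence ?thesis using va by (simp add: ptrans_self) }
    moreover
    { assume "b = c" hence ?thesis using ptrans_tangent[OF a b va] by (simp add: ptrans_self) }
    moreover
    { assume "a = b" hence ?thesis using ptrans_inv[OF a c va] va by (simp add: ptrans_self) }
    ultimately show ?thesis using True by blast
  qed
  thus ?thesis using True by (simp add: lnorm_def tri_area_def)
next
  case False
  thus ?thesis using holonomy_nondeg[OF a b c _ _ _ va nva] by blast
qed

theorem lemma4:
  assumes "a \<in> hyp3" and "b \<in> hyp3" and "c \<in> hyp3"
    and "va \<in> tangent a" and "lnorm va = 1"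
    and "vb \<in> tangent b" and "lnorm vb = 1"
  shows "lnorm (ptrans a b va - vb)
           \<le> tri_area a b c + lnorm (ptrans a c va - ptrans b c vb)"
proof -
  note a = assms(1) and b = assms(2) and c = assms(3) and va = assms(4) and vb = assms(6)
  have nva: "mink va va = 1" using assms(5) by (simp add: lnorm_def)
  let ?u1 = "ptrans a b va"
  let ?t = "ptrans a c va"
  let ?u3 = "ptrans c b ?t"
  have t1: "?u1 \<in> tangent b" by (rule ptrans_tangent[OF a b va])
  have tt: "?t \<in> tangent c" by (rule ptrans_tangent[OF a c va])
  have t3: "?u3 \<in> tangent b" by (rule ptrans_tangent[OF c b tt])
  have s1: "lnorm (?u1 - vb) \<le> lnorm (?u1 - ?u3) + lnorm (?u3 - vb)"
    using lnorm_triangle[OF b tangent_diff[OF t1 t3] tangent_diff[OF t3 vb]] by simp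
  have s2: "lnorm (?u3 - vb) = lnorm (?t - ptrans b c vb)"
    unfolding lnorm_def mink_diff_sq
    using ptrans_isom[OF c b tt tt] ptrans_adj[OF b c tt vb] ptrans_isom[OF b c vb vb] by simp
  have s3: "lnorm (?u1 - ?u3) \<le> tri_area a b c" by (rule holonomy_bound[OF a b c va nva])
  show ?thesis using s1 s2 s3 by linarith
qed

end
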